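(* Let $k$ be even, $1\le s\le k-1$, and let $G$ be a $k$-uniform $s$-cycle with $m$ edges and $n=m(k-s)$ vertices, where $k=q(k-s)$ for an odd integer $q$. Then $G$ is odd-bipartite.
   Context: A $k$-uniform $s$-cycle with $m$ edges has vertex set $\mathbb{Z}_n$, $n=m(k-s)$ (vertex $n+i$ identified with $i$), and edges $e_j=\{j(k-s)+1,\ldots,j(k-s)+k\}$, $j=0,\ldots,m-1$; it is assumed that $n\ge 2k-s$. A $k$-uniform hypergraph with $k$ even and vertex set $V$ is odd-bipartite if either it has no edges or there is a partition $V=V_1\cup V_2$ with $V_1,V_2\ne\emptyset$ such that every edge intersects $V_1$ in an odd number of vertices. *)

theory Defs
  imports Main
begin

definition s_cycle_vertices :: "nat \<Rightarrow> nat \<Rightarrow> nat \<Rightarrow> nat set" where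
  "s_cycle_vertices k s m = {0..<m * (k - s)}"

definition s_cycle_edges :: "nat \<Rightarrow> nat \<Rightarrow> nat \<Rightarrow> nat set set" where
  "s_cycle_edges k s m =
     {{(j * (k - s) + i) mod (m * (k - s)) | i. i \<in> {1..k}} | j. j < m}"

definition odd_bipartite :: "'a set \<Rightarrow> 'a set set \<Rightarrow> bool" where
  "odd_bipartite V E \<longleftrightarrow> E = {} \<or>
     (\<exists>V1 V2. V = V1 \<union> V2 \<and> V1 \<inter> V2 = {} \<and> V1 \<noteq> {} \<and> V2 \<noteq> {} \<and>
        (\<forall>e\<in>E. odd (card (e \<inter> V1))))"

end

theory Submission
  imports Defs
begin

theorem corollary4p1:
  fixes k s m q :: nat
  assumes "even k" and "1 \<le> s" and "s \<le> k - 1"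
    and "k = q * (k - s)" and "odd q"
    and "m * (k - s) \<ge> 2 * k - s"
  shows "odd_bipartite (s_cycle_vertices k s m) (s_cycle_edges k s m)"
proof -
  define d where "d = k - s"
  define n where "n = m * d"
  have kq: "k = q * d" using assms(4) d_def by simp
  have d1: "d \<ge> 1" using assms(2,3) d_def by simp
  have d2: "d \<ge> 2"
  proof (rule ccontr)
    assume "\<not> d \<ge> 2"
    then have "d = 1" using d1 by simp
    then show False using kq assms(1,5) by simp
  qed
  have kn: "k < n" using assms(6) assms(2,3) d_def n_def by simp
  have n0: "n > 0" using kn by simp
  have dn: "d dvd n" unfolding n_def by simp
  define V1 where "V1 = {x\<in>{0..<n}. d dvd x}"
  define V2 where "V2 = {x\<in>{0..<n}. \<not> d dvd x}"
  have card_q: "card {i\<in>{1..k}. d dvd i} = q"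
  proof -
    have "{i\<in>{1..k}. d dvd i} = (\<lambda>t. t*d) ` {1..q}"
    proof (rule set_eqI, rule iffI)
      fix i assume "i \<in> {i\<in>{1..k}. d dvd i}"
      then obtain t where t: "i = t*d" "1 \<le> i" "i \<le> k" by (auto elim!: dvdE simp: mult.commute)
      then have "1 \<le> t" by (cases t) auto
      moreover have "t \<le> q" using t kq d1 by simp
      ultimately show "i \<in> (\<lambda>t. t*d) ` {1..q}" using t by auto
    next
      fix i assume "i \<in> (\<lambda>t. t*d) ` {1..q}"
      then obtain t where "i = t*d" "1 \<le> t" "t \<le> q" using imageE atLeastAtMost_iff by (metis (no_types, lifting))
      then show "i \<in> {i\<in>{1..k}. d dvd i}" using kq d1
        by (auto simp: mult_le_mono1)
    qed
    moreover have "inj_on (\<lambda>t. t*d) {1..q}" using d1 by (auto simp: inj_on_def)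
    ultimately show ?thesis by (simp add: card_image)
  qed
  have edge: "odd (card (e \<inter> V1))" if "e \<in> s_cycle_edges k s m" for e
  proof -
    from that obtain j where e: "e = {(j * d + i) mod n | i. i \<in> {1..k}}"
      unfolding s_cycle_edges_def d_def n_def by auto
    define f where "f = (\<lambda>i. (j*d + i) mod n)"
    have inj: "inj_on f {1..k}"
    proof (rule inj_onI)
      fix a b assume a: "a \<in> {1..k}" and b: "b \<in> {1..k}" and eq: "f a = f b"
      have H: "n dvd (j*d+b) - (j*d+a)" if "a \<le> b" "f a = f b" for a b
        using that mod_eq_dvd_iff_nat[of "j*d+a" "j*d+b" n] unfolding f_def by simp
      show "a = b"
      proof (cases "a \<le> b")
        case True
        then have "n dvd b - a" using H[OF True eq] by simp
        moreover have "b - a < n" using b kn by auto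
        ultimately show ?thesis using True by (metis dvd_imp_le diff_is_0_eq le_antisym not_le not_gr0)
      next
        case False
        then have "n dvd a - b" using H[of b a] eq by simp
        moreover have "a - b < n" using a kn by auto
        ultimately show ?thesis using False by (metis dvd_imp_le diff_is_0_eq le_antisym not_le not_gr0)
      qed
    qed
    have dv: "d dvd f i \<longleftrightarrow> d dvd i" for i
    proof -
      have "d dvd f i \<longleftrightarrow> d dvd (j*d+i)" unfolding f_def using dn
        by (simp add: dvd_mod_iff)
      also have "\<dots> \<longleftrightarrow> d dvd i" by (simp add: dvd_add_right_iff)
      finally show ?thesis .
    qed
    have "e \<inter> V1 = f ` {i\<in>{1..k}. d dvd i}"
      unfolding e V1_def f_def[symmetric] using n0 dv by (auto simp: f_def)
    then have "card (e \<inter> V1) = card {i\<in>{1..k}. d dvd i}"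
      using inj by (metis (no_types, lifting) card_image inj_on_subset mem_Collect_eq subsetI)
    then show ?thesis using card_q assms(5) by simp
  qed
  have "s_cycle_vertices k s m = V1 \<union> V2" "V1 \<inter> V2 = {}"
    unfolding s_cycle_vertices_def V1_def V2_def n_def d_def by auto
  moreover have "V1 \<noteq> {}" using n0 unfolding V1_def by auto
  moreover have "V2 \<noteq> {}"
  proof -
    have "1 \<in> V2" using n0 d2 kn kq assms(5) dvd_imp_le[of d 1] unfolding V2_def by (cases q) auto
    then show ?thesis by auto
  qed
  ultimately show ?thesis unfolding odd_bipartite_def using edge by blast
qed

end
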